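(* The signature of the bilinear form $\eta^+$ on $V_q^+$ is $\operatorname{sg}(\eta^+)=\frac12\sum_{n=1}^{r-1}\epsilon_n$, and $\operatorname{sg}(\eta^+)=\operatorname{sg}_{V_q^+}(\Omega^+)$, the signature of the quadratic form $(x,y)\mapsto\operatorname{tr}_{V_q^+}(\Omega^+xy)$.
   Context: Let $r\ge3$ and $s$ be coprime odd integers with $0<s<r$, $q=\exp(i\pi s/r)$, and $\epsilon_n=(-1)^{\lfloor ns/r\rfloor}$ for $1\le n\le r-1$ (the sign of $[n]=\frac{q^n-q^{-n}}{q-q^{-1}}$; note $\epsilon_n=\epsilon_{r-n}$). $V_q^+$ is the SO$_3$ signed Verlinde algebra: the commutative semisimple $\mathbb{Q}$-algebra with basis $e_0,e_2,\dots,e_{r-3}$ (the even part of the signed Verlinde algebra $V_q$), a Frobenius algebra whose form $\eta^+(x,y)=\epsilon^+(xy)$ is diagonal in this basis with $\eta^+(e_{2n},e_{2n})=\epsilon_{2n+1}$, and $\Omega^+=\sum_n\epsilon_{2n+1}e_{2n}^2$. $\operatorname{tr}_{V}(a)$ denotes the trace of multiplication by $a$. *)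

theory Defs
  imports Complex_Main
begin

(* sign of the quantum integer [n] at q = exp(i pi s / r):  epsilon_n = (-1)^floor(n s / r) *)
definition qsign :: "nat \<Rightarrow> nat \<Rightarrow> nat \<Rightarrow> int" where
  "qsign r s n = (-1) ^ ((n * s) div r)"

definition qform :: "(nat \<Rightarrow> nat \<Rightarrow> real) \<Rightarrow> nat \<Rightarrow> (nat \<Rightarrow> real) \<Rightarrow> real" where
  "qform G m x = (\<Sum>i<m. \<Sum>j<m. G i j * x i * x j)"

definition pos_index :: "(nat \<Rightarrow> nat \<Rightarrow> real) \<Rightarrow> nat \<Rightarrow> nat" where
  "pos_index G m = Max {d. \<exists>v :: nat \<Rightarrow> nat \<Rightarrow> real. \<forall>c :: nat \<Rightarrow> real.
       (\<exists>j<d. c j \<noteq> 0) \<longrightarrow> qform G m (\<lambda>i. \<Sum>j<d. c j * v j i) > 0}"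

definition signature :: "(nat \<Rightarrow> nat \<Rightarrow> real) \<Rightarrow> nat \<Rightarrow> int" where
  "signature G m = int (pos_index G m) - int (pos_index (\<lambda>i j. - G i j) m)"

(* A finite-dimensional Q-algebra with basis indexed by 0..m-1 (basis element number n
   of V_q^+ is e_{2n}), given by structure constants: e_i e_j = sum_k c i j k e_k *)
definition basis_vec :: "nat \<Rightarrow> nat \<Rightarrow> rat" where
  "basis_vec i = (\<lambda>k. if k = i then 1 else 0)"

definition alg_mult :: "(nat \<Rightarrow> nat \<Rightarrow> nat \<Rightarrow> rat) \<Rightarrow> nat \<Rightarrow>
    (nat \<Rightarrow> rat) \<Rightarrow> (nat \<Rightarrow> rat) \<Rightarrow> (nat \<Rightarrow> rat)" where
  "alg_mult c m x y = (\<lambda>k. if k < m then (\<Sum>i<m. \<Sum>j<m. x i * y j * c i j k) else 0)"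

definition alg_tr :: "(nat \<Rightarrow> nat \<Rightarrow> nat \<Rightarrow> rat) \<Rightarrow> nat \<Rightarrow> (nat \<Rightarrow> rat) \<Rightarrow> rat" where
  "alg_tr c m a = (\<Sum>p<m. alg_mult c m a (basis_vec p) p)"

(* the counit epsilon^+ as a linear functional with values f k = epsilon^+(e_{2k}) *)
definition counit :: "(nat \<Rightarrow> rat) \<Rightarrow> nat \<Rightarrow> (nat \<Rightarrow> rat) \<Rightarrow> rat" where
  "counit f m x = (\<Sum>k<m. f k * x k)"

definition Omega_plus :: "nat \<Rightarrow> nat \<Rightarrow> (nat \<Rightarrow> nat \<Rightarrow> nat \<Rightarrow> rat) \<Rightarrow> nat \<Rightarrow> (nat \<Rightarrow> rat)" where
  "Omega_plus r s c m = (\<lambda>k. \<Sum>n<m. of_int (qsign r s (2*n+1)) *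
       alg_mult c m (basis_vec n) (basis_vec n) k)"

end

theory Submission
  imports Defs "Jordan_Normal_Form.Schur_Decomposition"
begin


lemma kernel_exists:
  fixes a :: "nat \<Rightarrow> nat \<Rightarrow> 'a::field"
  assumes "finite K" "finite J" "card K < card J"
  shows "\<exists>c. (\<exists>j\<in>J. c j \<noteq> 0) \<and> (\<forall>k\<in>K. (\<Sum>j\<in>J. a k j * c j) = 0)"
  using assms
proof (induction K arbitrary: a J rule: finite_induct)
  case empty
  then obtain j where "j \<in> J" by fastforce
  then show ?case by (intro exI[of _ "\<lambda>_. 1"]) auto
next
  case (insert k0 K)
  show ?case
  proof (cases "\<forall>j\<in>J. a k0 j = 0")
    case True
    from insert.IH[of J a] insert.prems insert.hyps obtain c where
      c: "(\<exists>j\<in>J. c j \<noteq> 0)" "(\<forall>k\<in>K. (\<Sum>j\<in>J. a k j * c j) = 0)" by auto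
    show ?thesis using c True by (intro exI[of _ c]) auto
  next
    case False
    then obtain j0 where j0: "j0 \<in> J" "a k0 j0 \<noteq> 0" by auto
    define J' where "J' = J - {j0}"
    define b where "b k j = a k j - a k j0 * a k0 j / a k0 j0" for k j
    have cardJ': "card K < card J'" using insert.prems insert.hyps j0 unfolding J'_def by auto
    from insert.IH[of J' b] cardJ' insert.prems obtain c' where
      c': "(\<exists>j\<in>J'. c' j \<noteq> 0)" "(\<forall>k\<in>K. (\<Sum>j\<in>J'. b k j * c' j) = 0)" unfolding J'_def by auto
    define S where "S = (\<Sum>j\<in>J'. a k0 j * c' j)"
    define c where "c j = (if j = j0 then - S / a k0 j0 else c' j)" for j
    have split: "(\<Sum>j\<in>J. a k j * c j) = a k j0 * c j0 + (\<Sum>j\<in>J'. a k j * c' j)" for k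
    proof -
      have "(\<Sum>j\<in>J. a k j * c j) = a k j0 * c j0 + (\<Sum>j\<in>J'. a k j * c j)"
        unfolding J'_def using j0 insert.prems by (simp add: sum.remove)
      also have "(\<Sum>j\<in>J'. a k j * c j) = (\<Sum>j\<in>J'. a k j * c' j)"
        by (rule sum.cong) (auto simp: c_def J'_def)
      finally show ?thesis .
    qed
    have "\<exists>j\<in>J. c j \<noteq> 0" using c' by (auto simp: c_def J'_def)
    moreover have "(\<Sum>j\<in>J. a k0 j * c j) = 0"
      unfolding split using j0 by (simp add: c_def S_def)
    moreover have "(\<Sum>j\<in>J. a k j * c j) = 0" if k: "k \<in> K" for k
    proof -
      have "0 = (\<Sum>j\<in>J'. b k j * c' j)" using c' k by auto
      also have "\<dots> = (\<Sum>j\<in>J'. a k j * c' j) - a k j0 / a k0 j0 * S"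
        unfolding b_def S_def by (simp add: algebra_simps sum_subtractf sum_distrib_left sum_divide_distrib)
      finally show ?thesis unfolding split using j0 by (simp add: c_def)
    qed
    ultimately show ?thesis by auto
  qed
qed


definition PS :: "(nat \<Rightarrow> nat \<Rightarrow> real) \<Rightarrow> nat \<Rightarrow> nat set" where
  "PS G m = {d. \<exists>v :: nat \<Rightarrow> nat \<Rightarrow> real. \<forall>c :: nat \<Rightarrow> real.
       (\<exists>j<d. c j \<noteq> 0) \<longrightarrow> qform G m (\<lambda>i. \<Sum>j<d. c j * v j i) > 0}"

lemma qform_cong: "(\<And>i. i < m \<Longrightarrow> x i = y i) \<Longrightarrow> qform G m x = qform G m y"
  unfolding qform_def by (intro sum.cong refl) auto

lemma qform_neg: "qform (\<lambda>i j. - G i j) m x = - qform G m x"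
  unfolding qform_def by (simp add: sum_negf)

lemma PS_bound: assumes "d \<in> PS G m" shows "d \<le> m"
proof (rule ccontr)
  assume "\<not> d \<le> m"
  from assms obtain v where v: "\<And>c. (\<exists>j<d. c j \<noteq> 0) \<Longrightarrow> qform G m (\<lambda>i. \<Sum>j<d. c j * v j i) > 0"
    unfolding PS_def by auto
  from kernel_exists[of "{..<m}" "{..<d}" "\<lambda>k j. v j k"] \<open>\<not> d \<le> m\<close>
  obtain c where c: "\<exists>j\<in>{..<d}. c j \<noteq> 0" "\<forall>k\<in>{..<m}. (\<Sum>j<d. v j k * c j) = 0" by auto
  have "qform G m (\<lambda>i. \<Sum>j<d. c j * v j i) = qform G m (\<lambda>i. 0)"
    using c(2) by (intro qform_cong) (auto simp: mult.commute)
  also have "\<dots> = 0" by (simp add: qform_def)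
  finally show False using v[of c] c(1) by auto
qed

lemma PS_0: "0 \<in> PS G m" unfolding PS_def by auto

lemma pos_index_PS: "pos_index G m = Max (PS G m)"
  unfolding pos_index_def PS_def ..

lemma PS_finite: "finite (PS G m)"
  by (rule finite_subset[of _ "{..m}"]) (auto dest: PS_bound)

lemma pos_index_mem: "pos_index G m \<in> PS G m"
  unfolding pos_index_PS by (rule Max_in[OF PS_finite]) (use PS_0 in auto)

lemma pos_index_ge: "d \<in> PS G m \<Longrightarrow> d \<le> pos_index G m"
  unfolding pos_index_PS using PS_finite by (intro Max_ge) auto

lemma pos_index_mono:
  assumes "\<And>x. qform G1 m x = qform G2 m (\<lambda>i. \<Sum>l<m. T i l * x l)"
  shows "pos_index G1 m \<le> pos_index G2 m"
proof -
  let ?d = "pos_index G1 m"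
  from pos_index_mem[of G1 m] obtain v where
    v: "\<And>c. (\<exists>j<?d. c j \<noteq> 0) \<Longrightarrow> qform G1 m (\<lambda>i. \<Sum>j<?d. c j * v j i) > 0"
    unfolding PS_def by auto
  define w where "w j i = (\<Sum>l<m. T i l * v j l)" for j i
  have "?d \<in> PS G2 m" unfolding PS_def
  proof (intro CollectI exI[of _ w] allI impI)
    fix c :: "nat \<Rightarrow> real" assume c: "\<exists>j<?d. c j \<noteq> 0"
    have eq: "(\<lambda>i. \<Sum>j<?d. c j * w j i) = (\<lambda>i. \<Sum>l<m. T i l * (\<Sum>j<?d. c j * v j l))"
    proof (rule ext)
      fix i
      have "(\<Sum>j<?d. c j * w j i) = (\<Sum>j<?d. \<Sum>l<m. T i l * (c j * v j l))"
        unfolding w_def by (simp add: sum_distrib_left ac_simps)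
      also have "\<dots> = (\<Sum>l<m. \<Sum>j<?d. T i l * (c j * v j l))" by (rule sum.swap)
      also have "\<dots> = (\<Sum>l<m. T i l * (\<Sum>j<?d. c j * v j l))" by (simp add: sum_distrib_left)
      finally show "(\<Sum>j<?d. c j * w j i) = (\<Sum>l<m. T i l * (\<Sum>j<?d. c j * v j l))" .
    qed
    show "qform G2 m (\<lambda>i. \<Sum>j<?d. c j * w j i) > 0"
      unfolding eq using v[OF c] assms by simp
  qed
  then show ?thesis by (rule pos_index_ge)
qed

lemma signature_congr:
  assumes "\<And>x. qform G1 m x = qform G2 m (\<lambda>i. \<Sum>l<m. T i l * x l)"
    and "\<And>x. qform G2 m x = qform G1 m (\<lambda>i. \<Sum>l<m. S i l * x l)"
  shows "signature G1 m = signature G2 m"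
proof -
  have "pos_index G1 m = pos_index G2 m"
    using pos_index_mono[of G1 m G2 T, OF assms(1)] pos_index_mono[of G2 m G1 S, OF assms(2)] by auto
  moreover have "pos_index (\<lambda>i j. - G1 i j) m \<le> pos_index (\<lambda>i j. - G2 i j) m"
    by (rule pos_index_mono[of _ _ _ T]) (simp only: qform_neg assms(1))
  moreover have "pos_index (\<lambda>i j. - G2 i j) m \<le> pos_index (\<lambda>i j. - G1 i j) m"
    by (rule pos_index_mono[of _ _ _ S]) (simp only: qform_neg assms(2))
  ultimately show ?thesis unfolding signature_def by simp
qed

lemma qform_diag:
  assumes "\<And>i j. i < m \<Longrightarrow> j < m \<Longrightarrow> G i j = (if i = j then g i else 0)"
  shows "qform G m x = (\<Sum>i<m. g i * (x i)^2)"
  unfolding qform_def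
proof (rule sum.cong[OF refl])
  fix i assume i: "i \<in> {..<m}"
  have "(\<Sum>j<m. G i j * x i * x j) = (\<Sum>j<m. if j = i then g i * x i * x i else 0)"
    using i assms by (intro sum.cong refl) auto
  also have "\<dots> = g i * (x i)^2" using i by (simp add: power2_eq_square)
  finally show "(\<Sum>j<m. G i j * x i * x j) = g i * (x i)^2" .
qed

lemma pos_index_diag:
  assumes "\<And>i j. i < m \<Longrightarrow> j < m \<Longrightarrow> G i j = (if i = j then g i else 0)"
  shows "pos_index G m = card {i. i < m \<and> g i > 0}"
proof (rule antisym)
  define P where "P = {i. i < m \<and> g i > 0}"
  have finP: "finite P" unfolding P_def by auto
  show "pos_index G m \<le> card {i. i < m \<and> g i > 0}"
  proof (rule ccontr)
    let ?d = "pos_index G m"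
    assume "\<not> ?thesis"
    hence lt: "card P < card {..<?d}" unfolding P_def by simp
    from pos_index_mem[of G m] obtain v where
      v: "\<And>c. (\<exists>j<?d. c j \<noteq> 0) \<Longrightarrow> qform G m (\<lambda>i. \<Sum>j<?d. c j * v j i) > 0"
      unfolding PS_def by auto
    from kernel_exists[OF finP _ lt, of "\<lambda>k j. v j k"]
    obtain c where c: "\<exists>j\<in>{..<?d}. c j \<noteq> 0" "\<forall>k\<in>P. (\<Sum>j<?d. v j k * c j) = 0" by auto
    let ?x = "\<lambda>i. \<Sum>j<?d. c j * v j i"
    have "qform G m ?x = (\<Sum>i<m. g i * (?x i)^2)" by (rule qform_diag[OF assms])
    also have "\<dots> \<le> 0"
    proof (rule sum_nonpos)
      fix i assume i: "i \<in> {..<m}"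
      show "g i * (?x i)^2 \<le> 0"
      proof (cases "i \<in> P")
        case True
        then have "?x i = 0" using c(2) by (auto simp: mult.commute)
        then show ?thesis by simp
      next
        case False
        then have "g i \<le> 0" using i unfolding P_def by auto
        then show ?thesis by (simp add: mult_nonpos_nonneg)
      qed
    qed
    finally show False using v[of c] c(1) by auto
  qed
  show "card {i. i < m \<and> g i > 0} \<le> pos_index G m"
  proof (rule pos_index_ge)
    obtain h where h: "bij_betw h {0..<card P} P" using ex_bij_betw_nat_finite[OF finP] by blast
    define v where "v j i = (if h j = i then 1 else 0 :: real)" for j i
    show "card {i. i < m \<and> g i > 0} \<in> PS G m" unfolding PS_def P_def[symmetric]
    proof (intro CollectI exI[of _ v] allI impI)
      fix c :: "nat \<Rightarrow> real" assume c: "\<exists>j<card P. c j \<noteq> 0"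
      let ?x = "\<lambda>i. \<Sum>j<card P. c j * v j i"
      have x_out: "?x i = 0" if "i \<notin> P" for i
        using h that unfolding v_def bij_betw_def by (auto intro!: sum.neutral)
      have x_in: "?x (h j) = c j" if "j < card P" for j
      proof -
        have "?x (h j) = (\<Sum>j'<card P. if j' = j then c j' else 0)"
          using h that unfolding v_def bij_betw_def inj_on_def
          by (intro sum.cong refl) auto
        also have "\<dots> = c j" using that by simp
        finally show ?thesis .
      qed
      have "qform G m ?x = (\<Sum>i<m. g i * (?x i)^2)" by (rule qform_diag[OF assms])
      also have "\<dots> = (\<Sum>i\<in>P. g i * (?x i)^2)"
        using x_out by (intro sum.mono_neutral_right) (auto simp: P_def)
      also have "\<dots> = (\<Sum>j\<in>{0..<card P}. g (h j) * (c j)^2)"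
        using x_in by (subst sum.reindex_bij_betw[OF h, symmetric]) (auto intro!: sum.cong)
      also have "\<dots> > 0"
      proof -
        from c obtain j0 where j0: "j0 < card P" "c j0 \<noteq> 0" by auto
        have gpos: "g (h j) > 0" if "j < card P" for j
          using h that unfolding bij_betw_def P_def by auto
        have nn: "0 \<le> g (h j) * (c j)^2" if "j < card P" for j
          using gpos[OF that] by simp
        have "(\<Sum>j\<in>{0..<card P}. g (h j) * (c j)^2) \<ge> g (h j0) * (c j0)^2"
          using j0 nn by (intro member_le_sum) auto
        moreover have "g (h j0) * (c j0)^2 > 0" using gpos[OF j0(1)] j0(2) by simp
        ultimately show ?thesis by linarith
      qed
      finally show "qform G m ?x > 0" .
    qed
  qed
qed


lemma sum4_swap:
  "(\<Sum>l\<in>A. \<Sum>p\<in>B. \<Sum>i\<in>C. \<Sum>j\<in>D. F l p i j) = (\<Sum>i\<in>C. \<Sum>j\<in>D. \<Sum>p\<in>B. \<Sum>l\<in>A. F l p i j)"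
proof -
  have "(\<Sum>l\<in>A. \<Sum>p\<in>B. \<Sum>i\<in>C. \<Sum>j\<in>D. F l p i j) = (\<Sum>l\<in>A. \<Sum>i\<in>C. \<Sum>p\<in>B. \<Sum>j\<in>D. F l p i j)"
    by (intro sum.cong refl) (rule sum.swap)
  also have "\<dots> = (\<Sum>i\<in>C. \<Sum>l\<in>A. \<Sum>p\<in>B. \<Sum>j\<in>D. F l p i j)" by (rule sum.swap)
  also have "\<dots> = (\<Sum>i\<in>C. \<Sum>l\<in>A. \<Sum>j\<in>D. \<Sum>p\<in>B. F l p i j)"
    by (intro sum.cong refl) (rule sum.swap)
  also have "\<dots> = (\<Sum>i\<in>C. \<Sum>j\<in>D. \<Sum>l\<in>A. \<Sum>p\<in>B. F l p i j)"
    by (intro sum.cong refl) (rule sum.swap)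
  also have "\<dots> = (\<Sum>i\<in>C. \<Sum>j\<in>D. \<Sum>p\<in>B. \<Sum>l\<in>A. F l p i j)"
    by (intro sum.cong refl) (rule sum.swap)
  finally show ?thesis .
qed

locale falg =
  fixes c :: "nat \<Rightarrow> nat \<Rightarrow> nat \<Rightarrow> rat" and m :: nat
  assumes comm: "\<And>i j k. i < m \<Longrightarrow> j < m \<Longrightarrow> k < m \<Longrightarrow> c i j k = c j i k"
    and assoc: "\<And>i j k p. i < m \<Longrightarrow> j < m \<Longrightarrow> k < m \<Longrightarrow> p < m \<Longrightarrow>
        (\<Sum>l<m. c i j l * c l k p) = (\<Sum>l<m. c j k l * c i l p)"
begin

abbreviation mul where "mul \<equiv> alg_mult c m"

lemma ifz_mult1[simp]: "(if P then a else 0) * b = (if P then a * b else (0::'a::mult_zero))"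
  by simp
lemma ifz_mult2[simp]: "b * (if P then a else 0) = (if P then b * a else (0::'a::mult_zero))"
  by simp

lemma bv_mult1[simp]: "basis_vec i k * a = (if k = i then a else 0)"
  by (simp add: basis_vec_def)
lemma bv_mult2[simp]: "a * basis_vec i k = (if k = i then a else 0)"
  by (simp add: basis_vec_def)

lemma mul_out: "\<not> k < m \<Longrightarrow> mul x y k = 0"
  by (simp add: alg_mult_def)

lemma mul_in: "k < m \<Longrightarrow> mul x y k = (\<Sum>i<m. \<Sum>j<m. x i * y j * c i j k)"
  by (simp add: alg_mult_def)

lemma mul_cong: "(\<And>i. i < m \<Longrightarrow> x i = x' i) \<Longrightarrow> (\<And>i. i < m \<Longrightarrow> y i = y' i) \<Longrightarrow> mul x y = mul x' y'"
  unfolding alg_mult_def by (intro ext if_cong refl sum.cong) auto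

lemma mul_comm: "mul x y = mul y x"
proof (rule ext)
  fix k show "mul x y k = mul y x k"
  proof (cases "k < m")
    case True
    have "mul x y k = (\<Sum>i<m. \<Sum>j<m. y j * x i * c j i k)"
      unfolding mul_in[OF True] using True by (intro sum.cong refl) (simp add: comm)
    also have "\<dots> = mul y x k" unfolding mul_in[OF True] by (rule sum.swap)
    finally show ?thesis .
  qed (simp add: mul_out)
qed

lemma mul_assoc: "mul (mul x y) z = mul x (mul y z)"
proof (rule ext)
  fix k show "mul (mul x y) z k = mul x (mul y z) k"
  proof (cases "k < m")
    case True
    have "mul (mul x y) z k = (\<Sum>l<m. \<Sum>p<m. \<Sum>i<m. \<Sum>j<m. x i * y j * z p * (c i j l * c l p k))"
      unfolding mul_in[OF True] by (intro sum.cong refl) (simp add: mul_in sum_distrib_right sum_distrib_left ac_simps)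
    also have "\<dots> = (\<Sum>i<m. \<Sum>j<m. \<Sum>p<m. \<Sum>l<m. x i * y j * z p * (c i j l * c l p k))"
      by (rule sum4_swap)
    also have "\<dots> = (\<Sum>i<m. \<Sum>j<m. \<Sum>p<m. x i * y j * z p * (\<Sum>l<m. c i j l * c l p k))"
      by (simp add: sum_distrib_left)
    also have "\<dots> = (\<Sum>i<m. \<Sum>j<m. \<Sum>p<m. x i * y j * z p * (\<Sum>l<m. c j p l * c i l k))"
      using True by (intro sum.cong refl) (simp add: assoc)
    also have "\<dots> = (\<Sum>i<m. \<Sum>j<m. \<Sum>p<m. \<Sum>l<m. x i * y j * z p * (c j p l * c i l k))"
      by (simp add: sum_distrib_left)
    also have "\<dots> = (\<Sum>i<m. \<Sum>j<m. \<Sum>l<m. \<Sum>p<m. x i * y j * z p * (c j p l * c i l k))"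
      by (rule sum.cong[OF refl], rule sum.cong[OF refl], rule sum.swap)
    also have "\<dots> = (\<Sum>i<m. \<Sum>l<m. \<Sum>j<m. \<Sum>p<m. x i * y j * z p * (c j p l * c i l k))"
      by (rule sum.cong[OF refl], rule sum.swap)
    also have "\<dots> = mul x (mul y z) k"
      unfolding mul_in[OF True] by (intro sum.cong refl) (simp add: mul_in sum_distrib_right sum_distrib_left ac_simps)
    finally show ?thesis .
  qed (simp add: mul_out)
qed

lemma mul_basis: "i < m \<Longrightarrow> j < m \<Longrightarrow> k < m \<Longrightarrow> mul (basis_vec i) (basis_vec j) k = c i j k"
  by (simp add: mul_in)

lemma mul_coord: "k < m \<Longrightarrow> mul y z k = (\<Sum>l<m. mul y (basis_vec l) k * z l)"
  unfolding mul_in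
  by (subst sum.swap) (simp add: sum_distrib_left ac_simps mul_in)

lemma mul_zero: "mul y (\<lambda>_. 0) = (\<lambda>_. 0)"
  by (rule ext) (simp add: alg_mult_def)

end

lemma counit_zero: "counit f m (\<lambda>_. 0) = 0" by (simp add: counit_def)

locale ffrob = falg +
  fixes f g :: "nat \<Rightarrow> rat"
  assumes frob: "\<And>i j. i < m \<Longrightarrow> j < m \<Longrightarrow>
        counit f m (mul (basis_vec i) (basis_vec j)) = (if i = j then g i else 0)"
    and gsq: "\<And>i. i < m \<Longrightarrow> g i * g i = 1"
    and reduced: "\<And>x. (\<forall>k<m. mul x x k = 0) \<Longrightarrow> (\<forall>k<m. x k = 0)"
begin

lemma fsum: "i < m \<Longrightarrow> j < m \<Longrightarrow> (\<Sum>k<m. f k * c i j k) = (if i = j then g i else 0)"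
  using frob[of i j] by (simp add: counit_def mul_basis)

lemma counit_mul: "counit f m (mul x y) = (\<Sum>i<m. g i * x i * y i)"
proof -
  have "counit f m (mul x y) = (\<Sum>k<m. \<Sum>i<m. \<Sum>j<m. x i * y j * (f k * c i j k))"
    unfolding counit_def by (intro sum.cong refl) (simp add: mul_in sum_distrib_left ac_simps)
  also have "\<dots> = (\<Sum>i<m. \<Sum>j<m. \<Sum>k<m. x i * y j * (f k * c i j k))"
  proof -
    have "(\<Sum>k<m. \<Sum>i<m. \<Sum>j<m. x i * y j * (f k * c i j k)) = (\<Sum>i<m. \<Sum>k<m. \<Sum>j<m. x i * y j * (f k * c i j k))"
      by (rule sum.swap)
    also have "\<dots> = (\<Sum>i<m. \<Sum>j<m. \<Sum>k<m. x i * y j * (f k * c i j k))"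
      by (rule sum.cong[OF refl], rule sum.swap)
    finally show ?thesis .
  qed
  also have "\<dots> = (\<Sum>i<m. \<Sum>j<m. x i * y j * (if i = j then g i else 0))"
    by (intro sum.cong refl) (simp add: sum_distrib_left[symmetric] fsum)
  also have "\<dots> = (\<Sum>i<m. g i * x i * y i)"
    by (intro sum.cong refl) (simp add: ac_simps)
  finally show ?thesis .
qed

lemma counit_coord: "p < m \<Longrightarrow> counit f m (mul (basis_vec p) z) = g p * z p"
  by (simp add: counit_mul)

definition Om :: "nat \<Rightarrow> rat" where
  "Om = (\<lambda>k. \<Sum>n<m. g n * mul (basis_vec n) (basis_vec n) k)"

lemma Om_in: "k < m \<Longrightarrow> Om k = (\<Sum>n<m. g n * c n n k)"
  unfolding Om_def by (intro sum.cong refl) (simp add: mul_basis)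

lemma Om_out: "\<not> k < m \<Longrightarrow> Om k = 0"
  unfolding Om_def by (simp add: mul_out)

lemma c_swap: assumes i: "i < m" and p: "p < m" shows "c i p p = g i * g p * c p p i"
proof -
  have "g p * c i p p = counit f m (mul (basis_vec p) (mul (basis_vec i) (basis_vec p)))"
    using i p by (simp add: counit_coord mul_basis)
  also have "mul (basis_vec p) (mul (basis_vec i) (basis_vec p)) = mul (basis_vec i) (mul (basis_vec p) (basis_vec p))"
    by (simp only: mul_assoc[symmetric] mul_comm[of "basis_vec p" "basis_vec i"])
  also have "counit f m \<dots> = g i * c p p i"
    using i p by (simp add: counit_coord mul_basis)
  finally have "g p * c i p p = g i * c p p i" .
  have "c i p p = (g p * g p) * c i p p" using gsq[OF p] by simp
  also have "\<dots> = g p * (g p * c i p p)" by (simp only: mult.assoc)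
  also have "\<dots> = g p * (g i * c p p i)" by (simp only: \<open>g p * c i p p = g i * c p p i\<close>)
  also have "\<dots> = g i * g p * c p p i" by (simp only: ac_simps)
  finally show ?thesis .
qed

lemma mul_right_basis: "p < m \<Longrightarrow> k < m \<Longrightarrow> mul a (basis_vec p) k = (\<Sum>i<m. a i * c i p k)"
  by (simp add: mul_in)

lemma alg_tr_eq: "alg_tr c m a = counit f m (mul a Om)"
proof -
  have "alg_tr c m a = (\<Sum>p<m. \<Sum>i<m. a i * c i p p)"
    unfolding alg_tr_def by (intro sum.cong refl) (simp add: mul_right_basis)
  also have "\<dots> = (\<Sum>p<m. \<Sum>i<m. g i * a i * (g p * c p p i))"
    by (intro sum.cong refl) (simp add: c_swap ac_simps)
  also have "\<dots> = (\<Sum>i<m. \<Sum>p<m. g i * a i * (g p * c p p i))" by (rule sum.swap)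
  also have "\<dots> = (\<Sum>i<m. g i * a i * Om i)"
    by (intro sum.cong refl) (simp add: Om_in sum_distrib_left)
  also have "\<dots> = counit f m (mul a Om)" by (simp add: counit_mul)
  finally show ?thesis .
qed

primrec pw :: "(nat \<Rightarrow> rat) \<Rightarrow> nat \<Rightarrow> (nat \<Rightarrow> rat)" where
  "pw x 0 = x"
| "pw x (Suc k) = mul (pw x k) x"

lemma pw_mul: "mul (pw x a) (pw x b) = pw x (a + b + 1)"
proof (induction b)
  case 0 then show ?case by simp
next
  case (Suc b)
  have "mul (pw x a) (pw x (Suc b)) = mul (mul (pw x a) (pw x b)) x" by (simp add: mul_assoc)
  also have "\<dots> = pw x (a + Suc b + 1)" using Suc by simp
  finally show ?case .
qed

lemma mul_zero_left: "(\<And>k. k < m \<Longrightarrow> y k = 0) \<Longrightarrow> mul y z = (\<lambda>_. 0)"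
proof -
  assume "\<And>k. k < m \<Longrightarrow> y k = 0"
  then have "mul y z = mul (\<lambda>_. 0) z" by (intro mul_cong) auto
  also have "\<dots> = (\<lambda>_. 0)" by (simp add: mul_comm mul_zero)
  finally show ?thesis .
qed

lemma nilpotent_zero: "(\<forall>k<m. pw x n k = 0) \<Longrightarrow> (\<forall>k<m. x k = 0)"
proof (induction n rule: less_induct)
  case (less n)
  show ?case
  proof (cases n)
    case 0 then show ?thesis using less.prems by simp
  next
    case (Suc n')
    define h where "h = n div 2"
    have hn: "h < n" using Suc unfolding h_def by simp
    have sq: "mul (pw x h) (pw x h) = pw x (h + h + 1)" by (rule pw_mul)
    have "\<forall>k<m. pw x (h + h + 1) k = 0"
    proof (cases "h + h + 1 = n")
      case True then show ?thesis using less.prems by simp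
    next
      case False
      then have eq: "h + h + 1 = n + (h + h - n) + 1" unfolding h_def by auto
      have "pw x (h + h + 1) = mul (pw x n) (pw x (h + h - n))"
        by (subst eq, rule pw_mul[symmetric])
      also have "\<dots> = (\<lambda>_. 0)" using less.prems by (intro mul_zero_left) auto
      finally show ?thesis by simp
    qed
    then have "\<forall>k<m. pw x h k = 0" using reduced[of "pw x h"] sq by simp
    then show ?thesis using less.IH[OF hn] by blast
  qed
qed

lemma tr_pw_zero:
  assumes "\<forall>k<m. mul Om x k = 0"
  shows "alg_tr c m (pw x n) = 0"
proof -
  have z: "mul x Om = (\<lambda>_. 0)"
  proof (rule ext)
    fix k show "mul x Om k = 0" using assms by (cases "k < m") (auto simp: mul_comm mul_out)
  qed
  show ?thesis
  proof (cases n)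
    case 0 then show ?thesis by (simp add: alg_tr_eq z counit_zero)
  next
    case (Suc n')
    then show ?thesis by (simp add: alg_tr_eq mul_assoc z mul_zero counit_zero)
  qed
qed

end


definition mtr :: "'a::comm_ring_1 mat \<Rightarrow> 'a" where
  "mtr M = (\<Sum>i<dim_row M. M $$ (i,i))"

lemma mtr_comm:
  assumes X: "X \<in> carrier_mat n n" and Y: "Y \<in> carrier_mat n n"
  shows "mtr (X * Y) = mtr (Y * X)"
proof -
  have "mtr (X * Y) = (\<Sum>i<n. \<Sum>l<n. X $$ (i,l) * Y $$ (l,i))"
    using X Y unfolding mtr_def by (intro sum.cong refl) (auto simp: scalar_prod_def lessThan_atLeast0)
  also have "\<dots> = (\<Sum>l<n. \<Sum>i<n. Y $$ (l,i) * X $$ (i,l))"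
    by (subst sum.swap) (simp add: ac_simps)
  also have "\<dots> = mtr (Y * X)"
    using X Y unfolding mtr_def by (intro sum.cong refl) (auto simp: scalar_prod_def lessThan_atLeast0)
  finally show ?thesis .
qed

lemma mtr_similar:
  assumes "similar_mat_wit A B P Q" "A \<in> carrier_mat n n"
  shows "mtr A = mtr B"
proof -
  from similar_mat_witD2[OF assms(2,1)] have
    C: "B \<in> carrier_mat n n" "P \<in> carrier_mat n n" "Q \<in> carrier_mat n n"
    and PQ: "P * Q = 1\<^sub>m n" "Q * P = 1\<^sub>m n" and AB: "A = P * B * Q" by auto
  have "mtr A = mtr ((P * B) * Q)" using AB by simp
  also have "\<dots> = mtr (Q * (P * B))" using C by (intro mtr_comm) auto
  also have "Q * (P * B) = (Q * P) * B" using C by (simp add: assoc_mult_mat)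
  also have "\<dots> = B" using C PQ by simp
  finally show ?thesis .
qed

lemma upper_pow_lower:
  assumes B: "B \<in> carrier_mat n n" and ut: "upper_triangular B"
  shows "i < n \<Longrightarrow> j < i \<Longrightarrow> (B ^\<^sub>m k) $$ (i,j) = 0"
proof (induction k arbitrary: i j)
  case 0 then show ?case using B by simp
next
  case (Suc k)
  have "(B ^\<^sub>m Suc k) $$ (i,j) = (\<Sum>l<n. (B ^\<^sub>m k) $$ (i,l) * B $$ (l,j))"
    using B Suc.prems by (auto simp: scalar_prod_def lessThan_atLeast0)
  also have "\<dots> = 0"
  proof (rule sum.neutral, intro ballI)
    fix l assume l: "l \<in> {..<n}"
    show "(B ^\<^sub>m k) $$ (i,l) * B $$ (l,j) = 0"
    proof (cases "l < i")
      case True then show ?thesis using Suc by simp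
    next
      case False
      then have "j < l" using Suc.prems by simp
      then have "B $$ (l,j) = 0" using ut B l unfolding upper_triangular_def by auto
      then show ?thesis by simp
    qed
  qed
  finally show ?case .
qed

lemma upper_pow_diag:
  assumes B: "B \<in> carrier_mat n n" and ut: "upper_triangular B" and i: "i < n"
  shows "(B ^\<^sub>m k) $$ (i,i) = (B $$ (i,i)) ^ k"
proof (induction k)
  case 0 then show ?case using B i by simp
next
  case (Suc k)
  have "(B ^\<^sub>m Suc k) $$ (i,i) = (\<Sum>l<n. (B ^\<^sub>m k) $$ (i,l) * B $$ (l,i))"
    using B i by (auto simp: scalar_prod_def lessThan_atLeast0)
  also have "\<dots> = (\<Sum>l<n. if l = i then (B ^\<^sub>m k) $$ (i,i) * B $$ (i,i) else 0)"
  proof (intro sum.cong refl)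
    fix l assume l: "l \<in> {..<n}"
    show "(B ^\<^sub>m k) $$ (i,l) * B $$ (l,i) = (if l = i then (B ^\<^sub>m k) $$ (i,i) * B $$ (i,i) else 0)"
    proof (cases "l < i")
      case True then show ?thesis using upper_pow_lower[OF B ut i True] by simp
    next
      case False
      then show ?thesis using ut B l unfolding upper_triangular_def by auto
    qed
  qed
  also have "\<dots> = (B $$ (i,i)) ^ Suc k" using i Suc by (simp add: power_commutes)
  finally show ?case .
qed

lemma strict_upper_pow:
  assumes B: "B \<in> carrier_mat n n" and ut: "upper_triangular B" and d: "\<And>i. i < n \<Longrightarrow> B $$ (i,i) = 0"
  shows "i < n \<Longrightarrow> j < n \<Longrightarrow> j < i + k \<Longrightarrow> (B ^\<^sub>m k) $$ (i,j) = 0"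
proof (induction k arbitrary: i j)
  case 0 then show ?case using B by simp
next
  case (Suc k)
  have "(B ^\<^sub>m Suc k) $$ (i,j) = (\<Sum>l<n. (B ^\<^sub>m k) $$ (i,l) * B $$ (l,j))"
    using B Suc.prems by (auto simp: scalar_prod_def lessThan_atLeast0)
  also have "\<dots> = 0"
  proof (rule sum.neutral, intro ballI)
    fix l assume l: "l \<in> {..<n}"
    show "(B ^\<^sub>m k) $$ (i,l) * B $$ (l,j) = 0"
    proof (cases "l < i + k")
      case True then show ?thesis using Suc l by simp
    next
      case False
      then have "j \<le> l" using Suc.prems by simp
      then have "B $$ (l,j) = 0" using ut B l d unfolding upper_triangular_def
        by (cases "j = l") auto
      then show ?thesis by simp
    qed
  qed
  finally show ?case .
qed

lemma powsum_zero:
  fixes lam :: "nat \<Rightarrow> 'a::field_char_0"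
  assumes fin: "finite I" and ps: "\<And>k. (\<Sum>i\<in>I. lam i ^ Suc k) = 0"
  shows "\<forall>i\<in>I. lam i = 0"
proof (rule ccontr)
  assume "\<not> ?thesis"
  then obtain i0 where i0: "i0 \<in> I" "lam i0 \<noteq> 0" by auto
  define a where "a = lam i0"
  define V where "V = lam ` I - {a}"
  define q where "q = [:0, 1:] * (\<Prod>v\<in>V. [:- v, 1:])"
  have finV: "finite V" using fin unfolding V_def by auto
  have qv: "poly q y = y * (\<Prod>v\<in>V. y - v)" for y
    unfolding q_def by (simp add: poly_prod)
  have qa: "poly q a \<noteq> 0" unfolding qv using finV i0 by (auto simp: a_def V_def)
  have q_other: "poly q (lam i) = (if lam i = a then poly q a else 0)" if "i \<in> I" for i
  proof (cases "lam i = a")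
    case False
    then have "lam i \<in> V" using that unfolding V_def by auto
    then show ?thesis unfolding qv using finV False by (auto simp: prod_zero_iff)
  qed simp
  have "(\<Sum>i\<in>I. poly q (lam i)) = (\<Sum>i\<in>I. if lam i = a then poly q a else 0)"
    using q_other by (intro sum.cong refl) auto
  also have "\<dots> = of_nat (card {i\<in>I. lam i = a}) * poly q a"
    using fin by (simp add: sum.If_cases Int_def)
  also have "\<dots> \<noteq> 0"
  proof -
    have "card {i\<in>I. lam i = a} \<noteq> 0" using fin i0 by (auto simp: a_def)
    then show ?thesis using qa by simp
  qed
  finally have ne: "(\<Sum>i\<in>I. poly q (lam i)) \<noteq> 0" .
  have "(\<Sum>i\<in>I. poly q (lam i)) = (\<Sum>i\<in>I. \<Sum>k\<le>degree q. coeff q k * lam i ^ k)"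
    by (simp add: poly_altdef)
  also have "\<dots> = (\<Sum>k\<le>degree q. coeff q k * (\<Sum>i\<in>I. lam i ^ k))"
    by (subst sum.swap) (simp add: sum_distrib_left)
  also have "\<dots> = 0"
  proof (rule sum.neutral, intro ballI)
    fix k assume "k \<in> {..degree q}"
    show "coeff q k * (\<Sum>i\<in>I. lam i ^ k) = 0"
    proof (cases k)
      case 0
      have "coeff q 0 = poly q 0" by (simp add: poly_0_coeff_0)
      also have "\<dots> = 0" by (simp add: qv)
      finally show ?thesis using 0 by simp
    next
      case (Suc k') then show ?thesis using ps by simp
    qed
  qed
  finally show False using ne by simp
qed


context ffrob begin

lemma core:
  assumes tr0: "\<And>n. alg_tr c m (pw x n) = 0"
  shows "\<forall>k<m. x k = 0"
proof -
  define A :: "complex mat" where "A = mat m m (\<lambda>(i,j). of_rat (mul x (basis_vec j) i))"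
  have A: "A \<in> carrier_mat m m" unfolding A_def by simp
  have powA: "A ^\<^sub>m Suc n = mat m m (\<lambda>(i,j). of_rat (mul (pw x n) (basis_vec j) i))" for n
  proof (induction n)
    case 0 then show ?case using A by (simp add: A_def)
  next
    case (Suc n)
    have "A ^\<^sub>m Suc (Suc n) = mat m m (\<lambda>(i,j). of_rat (mul (pw x n) (basis_vec j) i)) * A"
      by (subst pow_mat.simps(2), subst Suc, rule refl)
    also have "\<dots> = mat m m (\<lambda>(i,j). of_rat (mul (pw x (Suc n)) (basis_vec j) i))"
    proof (rule eq_matI)
      fix i j assume i: "i < dim_row (mat m m (\<lambda>(i,j). of_rat (mul (pw x (Suc n)) (basis_vec j) i)) :: complex mat)"
        and j: "j < dim_col (mat m m (\<lambda>(i,j). of_rat (mul (pw x (Suc n)) (basis_vec j) i)) :: complex mat)"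
      then have i: "i < m" and j: "j < m" by auto
      have "(mat m m (\<lambda>(i,j). of_rat (mul (pw x n) (basis_vec j) i)) * A) $$ (i,j)
          = (\<Sum>l<m. (of_rat (mul (pw x n) (basis_vec l) i) :: complex) * of_rat (mul x (basis_vec j) l))"
        using i j A by (simp add: A_def scalar_prod_def lessThan_atLeast0)
      also have "\<dots> = of_rat (\<Sum>l<m. mul (pw x n) (basis_vec l) i * mul x (basis_vec j) l)"
        by (simp add: of_rat_sum of_rat_mult)
      also have "(\<Sum>l<m. mul (pw x n) (basis_vec l) i * mul x (basis_vec j) l) = mul (pw x n) (mul x (basis_vec j)) i"
        using mul_coord[OF i, of "pw x n" "mul x (basis_vec j)"] by simp
      also have "\<dots> = mul (pw x (Suc n)) (basis_vec j) i" by (simp add: mul_assoc)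
      finally show "(mat m m (\<lambda>(i,j). of_rat (mul (pw x n) (basis_vec j) i)) * A) $$ (i,j) =
          mat m m (\<lambda>(i,j). of_rat (mul (pw x (Suc n)) (basis_vec j) i)) $$ (i,j)"
        using i j by simp
    qed (use A in auto)
    finally show ?case .
  qed
  obtain es where es: "char_poly A = (\<Prod>a\<leftarrow>es. [:- a, 1:])"
    using char_poly_factorized[OF A] by blast
  define B where "B = schur_upper_triangular A es"
  have B: "B \<in> carrier_mat m m" and ut: "upper_triangular B" and sim: "similar_mat A B"
    using schur_upper_triangular[OF A es] unfolding B_def by auto
  obtain P Q where wit: "similar_mat_wit A B P Q" using sim unfolding similar_mat_def by auto
  have witk: "similar_mat_wit (A ^\<^sub>m k) (B ^\<^sub>m k) P Q" for k by (rule similar_mat_wit_pow[OF wit])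
  have Ak: "A ^\<^sub>m k \<in> carrier_mat m m" for k using A by simp
  have trB: "(\<Sum>i<m. (B $$ (i,i)) ^ Suc n) = 0" for n
  proof -
    have "(\<Sum>i<m. (B $$ (i,i)) ^ Suc n) = mtr (B ^\<^sub>m Suc n)"
    proof -
      have "mtr (B ^\<^sub>m Suc n) = (\<Sum>i<m. (B ^\<^sub>m Suc n) $$ (i,i))"
        using B unfolding mtr_def by (simp del: pow_mat.simps)
      also have "\<dots> = (\<Sum>i<m. (B $$ (i,i)) ^ Suc n)"
        by (intro sum.cong refl) (simp add: upper_pow_diag[OF B ut] del: pow_mat.simps)
      finally show ?thesis by simp
    qed
    also have "\<dots> = mtr (A ^\<^sub>m Suc n)" using mtr_similar[OF witk Ak, of "Suc n"] by (simp del: pow_mat.simps)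
    also have "\<dots> = of_rat (alg_tr c m (pw x n))"
      unfolding powA mtr_def alg_tr_def by (simp add: of_rat_sum)
    also have "\<dots> = 0" using tr0 by simp
    finally show ?thesis .
  qed
  have diag0: "B $$ (i,i) = 0" if "i < m" for i
    using powsum_zero[of "{..<m}" "\<lambda>i. B $$ (i,i)", OF _ trB] that by simp
  have Bm: "B ^\<^sub>m m = 0\<^sub>m m m"
  proof (rule eq_matI)
    fix i j assume "i < dim_row (0\<^sub>m m m :: complex mat)" "j < dim_col (0\<^sub>m m m :: complex mat)"
    then have i: "i < m" and j: "j < m" by auto
    show "(B ^\<^sub>m m) $$ (i,j) = (0\<^sub>m m m :: complex mat) $$ (i,j)"
      using strict_upper_pow[OF B ut diag0 i j, of m] i j by simp
  qed (use B in \<open>simp_all del: pow_mat.simps\<close>)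
  have Am: "A ^\<^sub>m m = 0\<^sub>m m m"
  proof -
    from similar_mat_witD2[OF Ak witk[of m]] have
      C: "P \<in> carrier_mat m m" "Q \<in> carrier_mat m m" and eq: "A ^\<^sub>m m = P * B ^\<^sub>m m * Q" by auto
    show ?thesis unfolding eq Bm using C by (simp del: pow_mat.simps)
  qed
  show ?thesis
  proof (cases m)
    case 0 then show ?thesis by simp
  next
    case (Suc m')
    have z: "mul (pw x m') (basis_vec j) i = 0" if "i < m" "j < m" for i j
    proof -
      have "(A ^\<^sub>m m) $$ (i,j) = 0" using Am that by (simp del: pow_mat.simps)
      then have "(A ^\<^sub>m Suc m') $$ (i,j) = 0" by (simp only: Suc)
      then show ?thesis unfolding powA using that by simp
    qed
    have "\<forall>k<m. pw x (Suc m') k = 0"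
    proof (intro allI impI)
      fix k assume k: "k < m"
      have "pw x (Suc m') k = (\<Sum>l<m. mul (pw x m') (basis_vec l) k * x l)"
        unfolding pw.simps by (rule mul_coord[OF k])
      also have "\<dots> = 0" using z k by simp
      finally show "pw x (Suc m') k = 0" .
    qed
    then show ?thesis by (rule nilpotent_zero)
  qed
qed

end


context ffrob begin

lemma Om_inj: assumes "\<forall>k<m. mul Om x k = 0" shows "\<forall>k<m. x k = 0"
  using core[OF tr_pw_zero[OF assms]] .

definition MM :: "nat \<Rightarrow> nat \<Rightarrow> rat" where "MM k i = mul Om (basis_vec i) k"

lemma gramB: assumes i: "i < m" and j: "j < m"
  shows "alg_tr c m (mul (mul Om (basis_vec i)) (basis_vec j)) = (\<Sum>k<m. g k * MM k i * MM k j)"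
proof -
  have "alg_tr c m (mul (mul Om (basis_vec i)) (basis_vec j))
      = counit f m (mul (mul (mul Om (basis_vec i)) (basis_vec j)) Om)" by (rule alg_tr_eq)
  also have "mul (mul (mul Om (basis_vec i)) (basis_vec j)) Om = mul (mul Om (basis_vec i)) (mul Om (basis_vec j))"
    by (simp only: mul_assoc mul_comm[of "basis_vec j" Om])
  finally show ?thesis by (simp add: counit_mul MM_def)
qed

lemma MM_inverse: "\<exists>N. \<forall>k<m. \<forall>j<m. (\<Sum>l<m. MM k l * N l j) = (if k = j then 1 else 0)"
proof -
  have "\<forall>j\<in>{..<m}. \<exists>col. \<forall>k<m. (\<Sum>l<m. MM k l * col l) = basis_vec j k"
  proof
    fix j
    define a where "a k l = (if l < m then MM k l else basis_vec j k)" for k l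
    obtain cc where cc: "\<exists>l\<in>{..<Suc m}. cc l \<noteq> 0" "\<forall>k\<in>{..<m}. (\<Sum>l<Suc m. a k l * cc l) = 0"
      using kernel_exists[of "{..<m}" "{..<Suc m}" a] by auto
    have eq: "(\<Sum>l<m. MM k l * cc l) + basis_vec j k * cc m = 0" if "k < m" for k
      using cc(2) that by (simp add: a_def)
    have ccm: "cc m \<noteq> 0"
    proof
      assume z: "cc m = 0"
      have "\<forall>k<m. mul Om cc k = 0"
      proof (intro allI impI)
        fix k assume k: "k < m"
        have "mul Om cc k = (\<Sum>l<m. MM k l * cc l)" unfolding MM_def by (rule mul_coord[OF k])
        then show "mul Om cc k = 0" using eq[OF k] z by simp
      qed
      then have "\<forall>k<m. cc k = 0" by (rule Om_inj)
      then show False using cc(1) z by (auto simp: less_Suc_eq)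
    qed
    have "\<forall>k<m. (\<Sum>l<m. MM k l * (- cc l / cc m)) = basis_vec j k"
    proof (intro allI impI)
      fix k assume k: "k < m"
      have "(\<Sum>l<m. MM k l * (- cc l / cc m)) = - (\<Sum>l<m. MM k l * cc l) / cc m"
        by (simp add: sum_divide_distrib sum_negf)
      also have "\<dots> = basis_vec j k"
      proof -
        have h: "(\<Sum>l<m. MM k l * cc l) = - (basis_vec j k * cc m)"
          using eq[OF k] by (simp only: eq_neg_iff_add_eq_0)
        show ?thesis unfolding h minus_minus using ccm by (rule nonzero_mult_div_cancel_right)
      qed
      finally show "(\<Sum>l<m. MM k l * (- cc l / cc m)) = basis_vec j k" .
    qed
    then show "\<exists>col. \<forall>k<m. (\<Sum>l<m. MM k l * col l) = basis_vec j k"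
      by (rule exI[of _ "\<lambda>l. - cc l / cc m"])
  qed
  from bchoice[OF this] obtain N where N: "\<forall>j\<in>{..<m}. \<forall>k<m. (\<Sum>l<m. MM k l * N j l) = basis_vec j k"
    ..
  show ?thesis
  proof (intro exI[of _ "\<lambda>l j. N j l"] allI impI)
    fix k j assume "k < m" "j < m"
    then show "(\<Sum>l<m. MM k l * N j l) = (if k = j then 1 else 0)"
      using N by (auto simp: basis_vec_def)
  qed
qed

lemma sq_sum: "(\<Sum>i\<in>A. a i)^2 = (\<Sum>i\<in>A. \<Sum>j\<in>A. a i * a j)" for a :: "nat \<Rightarrow> real"
  by (simp add: power2_eq_square sum_product)

lemma signature_eq:
  "signature (\<lambda>i j. real_of_rat (counit f m (mul (basis_vec i) (basis_vec j)))) m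
   = signature (\<lambda>i j. real_of_rat (alg_tr c m (mul (mul Om (basis_vec i)) (basis_vec j)))) m"
proof -
  let ?G1 = "\<lambda>i j. real_of_rat (counit f m (mul (basis_vec i) (basis_vec j)))"
  let ?G2 = "\<lambda>i j. real_of_rat (alg_tr c m (mul (mul Om (basis_vec i)) (basis_vec j)))"
  define gr where "gr k = real_of_rat (g k)" for k
  define MR where "MR k i = real_of_rat (MM k i)" for k i
  obtain N where N: "\<forall>k<m. \<forall>j<m. (\<Sum>l<m. MM k l * N l j) = (if k = j then 1 else 0)"
    using MM_inverse by blast
  define NR where "NR k i = real_of_rat (N k i)" for k i
  have q1: "qform ?G1 m y = (\<Sum>k<m. gr k * (y k)^2)" for y
    by (rule qform_diag) (simp add: frob gr_def)
  have q2: "qform ?G2 m x = qform ?G1 m (\<lambda>k. \<Sum>l<m. MR k l * x l)" for x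
  proof -
    have "qform ?G2 m x = (\<Sum>i<m. \<Sum>j<m. \<Sum>k<m. gr k * (MR k i * x i * (MR k j * x j)))"
      unfolding qform_def
      by (intro sum.cong refl) (simp add: gramB of_rat_sum of_rat_mult gr_def MR_def sum_distrib_right sum_distrib_left ac_simps)
    also have "\<dots> = (\<Sum>k<m. \<Sum>i<m. \<Sum>j<m. gr k * (MR k i * x i * (MR k j * x j)))"
    proof -
      have "(\<Sum>i<m. \<Sum>j<m. \<Sum>k<m. gr k * (MR k i * x i * (MR k j * x j)))
          = (\<Sum>i<m. \<Sum>k<m. \<Sum>j<m. gr k * (MR k i * x i * (MR k j * x j)))"
        by (rule sum.cong[OF refl], rule sum.swap)
      also have "\<dots> = (\<Sum>k<m. \<Sum>i<m. \<Sum>j<m. gr k * (MR k i * x i * (MR k j * x j)))"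
        by (rule sum.swap)
      finally show ?thesis .
    qed
    also have "\<dots> = (\<Sum>k<m. gr k * (\<Sum>l<m. MR k l * x l)^2)"
      by (intro sum.cong refl) (simp add: sq_sum sum_distrib_left)
    also have "\<dots> = qform ?G1 m (\<lambda>k. \<Sum>l<m. MR k l * x l)" by (simp add: q1)
    finally show ?thesis .
  qed
  have q3: "qform ?G1 m y = qform ?G2 m (\<lambda>i. \<Sum>l<m. NR i l * y l)" for y
  proof -
    have inner: "(\<Sum>i<m. MR k i * (\<Sum>l<m. NR i l * y l)) = y k" if k: "k < m" for k
    proof -
      have "(\<Sum>i<m. MR k i * (\<Sum>l<m. NR i l * y l)) = (\<Sum>i<m. \<Sum>l<m. MR k i * NR i l * y l)"
        by (simp add: sum_distrib_left ac_simps)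
      also have "\<dots> = (\<Sum>l<m. \<Sum>i<m. MR k i * NR i l * y l)" by (rule sum.swap)
      also have "\<dots> = (\<Sum>l<m. real_of_rat (\<Sum>i<m. MM k i * N i l) * y l)"
        by (simp add: sum_distrib_right of_rat_sum of_rat_mult MR_def NR_def)
      also have "\<dots> = (\<Sum>l<m. (if k = l then y l else 0))"
        using N k by (intro sum.cong refl) auto
      also have "\<dots> = y k" using k by simp
      finally show ?thesis .
    qed
    have "qform ?G2 m (\<lambda>i. \<Sum>l<m. NR i l * y l)
        = qform ?G1 m (\<lambda>k. \<Sum>i<m. MR k i * (\<Sum>l<m. NR i l * y l))" by (rule q2)
    also have "\<dots> = qform ?G1 m y" by (rule qform_cong) (simp add: inner)
    finally show ?thesis by simp
  qed
  show ?thesis by (rule signature_congr[of _ _ _ NR MR]) (rule q3, rule q2)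
qed

lemma signature_G1:
  assumes pm: "\<And>i. i < m \<Longrightarrow> g i = 1 \<or> g i = -1"
  shows "real_of_int (signature (\<lambda>i j. real_of_rat (counit f m (mul (basis_vec i) (basis_vec j)))) m)
     = (\<Sum>i<m. real_of_rat (g i))"
proof -
  define gr where "gr k = real_of_rat (g k)" for k
  have p: "pos_index (\<lambda>i j. real_of_rat (counit f m (mul (basis_vec i) (basis_vec j)))) m
        = card {i. i < m \<and> gr i > 0}"
    by (rule pos_index_diag) (simp add: frob gr_def)
  have n: "pos_index (\<lambda>i j. - real_of_rat (counit f m (mul (basis_vec i) (basis_vec j)))) m
        = card {i. i < m \<and> - gr i > 0}"
    by (rule pos_index_diag) (simp add: frob gr_def)
  have pm': "gr i = 1 \<or> gr i = -1" if "i < m" for i using pm[OF that] by (auto simp: gr_def)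
  have "(\<Sum>i<m. gr i) = (\<Sum>i<m. (if gr i > 0 then 1 else 0) - (if - gr i > 0 then 1 else 0))"
    using pm' by (intro sum.cong refl) fastforce
  also have "\<dots> = real (card {i. i < m \<and> gr i > 0}) - real (card {i. i < m \<and> - gr i > 0})"
    by (simp add: sum_subtractf sum.If_cases Int_def conj_commute lessThan_def)
  finally show ?thesis unfolding signature_def p n gr_def by simp
qed

end


lemma qsign_pm: "qsign r s n = 1 \<or> qsign r s n = -1"
  by (simp add: qsign_def minus_one_power_iff)

lemma qsign_sq: "qsign r s n * qsign r s n = 1"
  using qsign_pm[of r s n] by auto

lemma qsign_sym:
  assumes n: "0 < n" "n < r" and cop: "coprime r s" and odd_s: "odd s"
  shows "qsign r s (r - n) = qsign r s n"
proof -
  define q where "q = n * s div r"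
  define \<rho> where "\<rho> = n * s mod r"
  have r0: "r > 0" using n by simp
  have ns: "n * s = r * q + \<rho>" unfolding q_def \<rho>_def by simp
  have \<rho>r: "\<rho> < r" unfolding \<rho>_def using r0 by simp
  have \<rho>0: "\<rho> \<noteq> 0"
  proof
    assume "\<rho> = 0"
    then have "r dvd n * s" unfolding \<rho>_def by auto
    then have "r dvd n" using cop by (simp add: coprime_dvd_mult_left_iff)
    then show False using n by (auto dest: dvd_imp_le)
  qed
  have qs: "q < s"
  proof -
    have "r * q \<le> n * s" using ns by simp
    also have "n * s < r * s" using n odd_s by (simp add: odd_pos)
    finally show ?thesis by simp
  qed
  have eq: "(r - n) * s = r * (s - q - 1) + (r - \<rho>)"
  proof -
    have "(r - n) * s = r * s - n * s" by (simp add: diff_mult_distrib)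
    also have "\<dots> = r * s - (r * q + \<rho>)" using ns by simp
    also have "\<dots> = r * (s - q - 1) + (r - \<rho>)"
    proof -
      define t where "t = s - q - 1"
      have st: "s = t + q + 1" using qs unfolding t_def by simp
      have "r * s = r * t + r * q + r" unfolding st by (simp add: algebra_simps)
      then show ?thesis using \<rho>r unfolding t_def[symmetric] by simp
    qed
    finally show ?thesis .
  qed
  have div: "(r - n) * s div r = s - q - 1"
  proof (rule div_nat_eqI)
    show "r * (s - q - 1) \<le> (r - n) * s" unfolding eq by simp
    show "(r - n) * s < r * Suc (s - q - 1)" unfolding eq using \<rho>0 \<rho>r by simp
  qed
  have par: "even (s - q - 1) \<longleftrightarrow> even q"
  proof -
    have "s - q - 1 + q = s - 1" using qs by simp
    moreover have "even (s - 1)" using odd_s by simp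
    ultimately show ?thesis by (metis even_add)
  qed
  show ?thesis unfolding qsign_def div q_def[symmetric] using par
    by (simp add: minus_one_power_iff)
qed

lemma sum_pairs: "(\<Sum>n=1..2*k. h n) = (\<Sum>i<k. h (2*i+1) + h (2*i+2))" for h :: "nat \<Rightarrow> real"
proof (induction k)
  case 0 then show ?case by simp
next
  case (Suc k)
  have "2 * Suc k = Suc (Suc (2 * k))" by simp
  then have "(\<Sum>n=1..2 * Suc k. h n) = (\<Sum>n=1..2*k. h n) + h (2*k+1) + h (2*k+2)"
    by (simp add: sum.cl_ivl_Suc)
  then show ?case using Suc by simp
qed

theorem mainTheorem14:
  fixes r s :: nat
    and c :: "nat \<Rightarrow> nat \<Rightarrow> nat \<Rightarrow> rat"
    and f :: "nat \<Rightarrow> rat"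
  defines "m \<equiv> (r - 1) div 2"
  assumes r3: "r \<ge> 3" and odd_r: "odd r" and odd_s: "odd s" and cop: "coprime r s"
    and s_pos: "0 < s" and s_lt: "s < r"
    and comm: "\<And>i j k. i < m \<Longrightarrow> j < m \<Longrightarrow> k < m \<Longrightarrow> c i j k = c j i k"
    and assoc: "\<And>i j k p. i < m \<Longrightarrow> j < m \<Longrightarrow> k < m \<Longrightarrow> p < m \<Longrightarrow>
        (\<Sum>l<m. c i j l * c l k p) = (\<Sum>l<m. c j k l * c i l p)"
    and semisimple: "\<And>x. (\<forall>k<m. alg_mult c m x x k = 0) \<Longrightarrow> (\<forall>k<m. x k = 0)"
    and frob: "\<And>i j. i < m \<Longrightarrow> j < m \<Longrightarrow>
        counit f m (alg_mult c m (basis_vec i) (basis_vec j))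
          = (if i = j then of_int (qsign r s (2*i+1)) else 0)"
  shows "real_of_int (signature (\<lambda>i j. real_of_rat
             (counit f m (alg_mult c m (basis_vec i) (basis_vec j)))) m)
           = (\<Sum>n=1..r-1. real_of_int (qsign r s n)) / 2
       \<and> signature (\<lambda>i j. real_of_rat
             (counit f m (alg_mult c m (basis_vec i) (basis_vec j)))) m
         = signature (\<lambda>i j. real_of_rat
             (alg_tr c m (alg_mult c m (alg_mult c m (Omega_plus r s c m) (basis_vec i))
                (basis_vec j)))) m"
proof -
  define g :: "nat \<Rightarrow> rat" where "g i = of_int (qsign r s (2*i+1))" for i
  interpret ffrob c m f g
  proof (unfold_locales)
    show "\<And>i j k. i < m \<Longrightarrow> j < m \<Longrightarrow> k < m \<Longrightarrow> c i j k = c j i k" by (rule comm)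
    show "\<And>i j k p. i < m \<Longrightarrow> j < m \<Longrightarrow> k < m \<Longrightarrow> p < m \<Longrightarrow>
        (\<Sum>l<m. c i j l * c l k p) = (\<Sum>l<m. c j k l * c i l p)" by (rule assoc)
    show "\<And>i j. i < m \<Longrightarrow> j < m \<Longrightarrow>
        counit f m (alg_mult c m (basis_vec i) (basis_vec j)) = (if i = j then g i else 0)"
      unfolding g_def by (rule frob)
    show "\<And>i. i < m \<Longrightarrow> g i * g i = 1"
      unfolding g_def by (simp add: of_int_mult[symmetric] qsign_sq del: of_int_mult)
    show "\<And>x. (\<forall>k<m. alg_mult c m x x k = 0) \<Longrightarrow> (\<forall>k<m. x k = 0)" by (rule semisimple)
  qed
  have OmEq: "Omega_plus r s c m = Om"
    unfolding Omega_plus_def Om_def g_def ..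
  have r: "r = 2 * m + 1" unfolding m_def using odd_r r3 by (auto elim!: oddE)
  let ?h = "\<lambda>n. real_of_int (qsign r s n)"
  have part1: "real_of_int (signature (\<lambda>i j. real_of_rat
             (counit f m (alg_mult c m (basis_vec i) (basis_vec j)))) m) = (\<Sum>i<m. ?h (2*i+1))"
  proof -
    have "real_of_int (signature (\<lambda>i j. real_of_rat
             (counit f m (alg_mult c m (basis_vec i) (basis_vec j)))) m) = (\<Sum>i<m. real_of_rat (g i))"
    proof (rule signature_G1)
      fix i
      from qsign_pm[of r s "2*i+1"] show "g i = 1 \<or> g i = -1"
        unfolding g_def by (elim disjE) simp_all
    qed
    also have "\<dots> = (\<Sum>i<m. ?h (2*i+1))" by (simp add: g_def)
    finally show ?thesis .
  qed
  have sym2: "?h (2*i+2) = ?h (2*(m - Suc i) + 1)" if "i < m" for i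
  proof -
    have "2*(m - Suc i) + 1 = r - (2*i+2)" using that r by simp
    then show ?thesis using qsign_sym[of "2*i+2" r s] that r cop odd_s by simp
  qed
  have "(\<Sum>n=1..r-1. ?h n) = (\<Sum>i<m. ?h (2*i+1) + ?h (2*i+2))"
    using sum_pairs[of ?h m] r by simp
  also have "\<dots> = (\<Sum>i<m. ?h (2*i+1)) + (\<Sum>i<m. ?h (2*(m - Suc i) + 1))"
    using sym2 by (simp add: sum.distrib)
  also have "(\<Sum>i<m. ?h (2*(m - Suc i) + 1)) = (\<Sum>i<m. ?h (2*i+1))"
    by (rule sum.nat_diff_reindex)
  finally have "(\<Sum>n=1..r-1. ?h n) = 2 * (\<Sum>i<m. ?h (2*i+1))" by simp
  then show ?thesis using part1 signature_eq unfolding OmEq by simp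
qed


end
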